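(* Consider the decremental maintenance procedure described in the context, with parameters satisfying $\ell=\Theta(\log n)$, $p=O(1/\log n)$ and $p\delta=\Omega(c)$. Then: - after initialization, the graph $H_\ell\cup D$ has $O(mp\log n+n\delta\log n)$ edges; - over any sequence of edge deletions issued to $G$, the graph $H_\ell\cup D$ undergoes $O(n\delta\log n)$ edge insertions in total.
   Context: Let $G=(V,E)$ be an undirected graph (parallel edges allowed, no self-loops) with $n$ vertices and $m$ edges $E=\{e_1,\dots,e_m\}$, subject to edge deletions. Fix integers $c\ge1$, $\delta>c$, $\ell\ge1$ and $p\in(0,1)$, and let $s=\lceil pm\rceil$. For $C\subseteq V$, $\partial_F(C)$ is the set of edges of $F$ with exactly one endpoint in $C$. **Initialization.** 1. Maintain graphs $G_0,\dots,G_\ell$, $H_0,\dots,H_\ell$ and $D$ on vertex set $V$. 2. Set all $G_i:=G$ and $D:=(V,\emptyset)$, and $H_0:=(V,\emptyset)$. 3. For $i=1,\dots,\ell$, choose a pairwise independent random function $r_i:\{1,\dots,s\}\to\{1,\dots,m\}$, with the $r_i$ mutually independent. Set $H_i:=H_{i-1}\cup(V,\{e_{r_i(1)},\dots,e_{r_i(s)}\})$. 4. Run CleanUp$(\emptyset)$. **Deletion of $e$.** Delete $e$ from $G$ and from $D$, then run CleanUp$(\{e\})$. **CleanUp$(A)$.** For $j=0,1,\dots,\ell$ in order: 1. Delete the edges of $A$ from $G_j$ and $H_j$. 2. While some edge of $H_j$ lies in a cut of $H_j$ of size $<c$, delete that edge from $H_j$. 3. While some connected component $C$ of $H_j$ has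 $S:=\partial_{G_j}(C)$ with $0<|S|<\delta$, add the edges of $S$ to $A$ and to $D$, and delete $S$ from $G_j$. The maintained certificate is $H_\ell\cup D$. *)

theory Defs
  imports Complex_Main
begin

text \<open>Multigraphs on a vertex set V (of naturals): edges are the indices 1..m,
  with endpoints given by ends. A graph on V is represented by its set of edge indices.\<close>

definition edges_ok :: "nat set \<Rightarrow> (nat \<Rightarrow> nat \<times> nat) \<Rightarrow> nat \<Rightarrow> bool" where
  "edges_ok V ends m \<longleftrightarrow> (\<forall>e\<in>{1..m}. fst (ends e) \<in> V \<and> snd (ends e) \<in> V \<and> fst (ends e) \<noteq> snd (ends e))"

definition bd :: "(nat \<Rightarrow> nat \<times> nat) \<Rightarrow> nat set \<Rightarrow> nat set \<Rightarrow> nat set" where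
  "bd ends F C = {e\<in>F. (fst (ends e) \<in> C) \<noteq> (snd (ends e) \<in> C)}"

definition adj :: "(nat \<Rightarrow> nat \<times> nat) \<Rightarrow> nat set \<Rightarrow> (nat \<times> nat) set" where
  "adj ends F = {(u,v). \<exists>e\<in>F. ends e = (u,v) \<or> ends e = (v,u)}"

definition comps :: "nat set \<Rightarrow> (nat \<Rightarrow> nat \<times> nat) \<Rightarrow> nat set \<Rightarrow> nat set set" where
  "comps V ends F = {{y\<in>V. (x,y) \<in> (adj ends F)\<^sup>*} | x. x \<in> V}"

definition small_cut_edge :: "nat set \<Rightarrow> (nat \<Rightarrow> nat \<times> nat) \<Rightarrow> nat \<Rightarrow> nat set \<Rightarrow> nat \<Rightarrow> bool" where
  "small_cut_edge V ends c H e \<longleftrightarrow> (\<exists>C. C \<subseteq> V \<and> e \<in> bd ends H C \<and> card (bd ends H C) < c)"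

definition prune_rel :: "nat set \<Rightarrow> (nat \<Rightarrow> nat \<times> nat) \<Rightarrow> nat \<Rightarrow> (nat set \<times> nat set) set" where
  "prune_rel V ends c = {(H, H - {e}) | H e. e \<in> H \<and> small_cut_edge V ends c H e}"

text \<open>CleanUp step 3: one separation step on (G_j, A, D), for fixed H_j\<close>
definition sep_rel :: "nat set \<Rightarrow> (nat \<Rightarrow> nat \<times> nat) \<Rightarrow> nat \<Rightarrow> nat set
    \<Rightarrow> ((nat set \<times> nat set \<times> nat set) \<times> (nat set \<times> nat set \<times> nat set)) set" where
  "sep_rel V ends \<delta> H = {((G, A, D), (G - S, A \<union> S, D \<union> S)) | G A D S.
      (\<exists>C\<in>comps V ends H. S = bd ends G C \<and> 0 < card S \<and> card S < \<delta>)}"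

definition sep_done :: "nat set \<Rightarrow> (nat \<Rightarrow> nat \<times> nat) \<Rightarrow> nat \<Rightarrow> nat set \<Rightarrow> nat set \<Rightarrow> bool" where
  "sep_done V ends \<delta> H G \<longleftrightarrow>
     (\<forall>C\<in>comps V ends H. \<not> (0 < card (bd ends G C) \<and> card (bd ends G C) < \<delta>))"

text \<open>Cleanup state: (G_j family, H_j family, D, A)\<close>
type_synonym cstate = "(nat \<Rightarrow> nat set) \<times> (nat \<Rightarrow> nat set) \<times> nat set \<times> nat set"

text \<open>Processing of level j of CleanUp (steps 1--3), all nondeterministic choices allowed\<close>
definition level_step :: "nat set \<Rightarrow> (nat \<Rightarrow> nat \<times> nat) \<Rightarrow> nat \<Rightarrow> nat \<Rightarrow> nat \<Rightarrow> cstate \<Rightarrow> cstate \<Rightarrow> bool" where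
  "level_step V ends c \<delta> j st st' \<longleftrightarrow> (case st of (Gs, Hs, D, A) \<Rightarrow>
     (\<exists>H2 G3 A3 D3.
        (Hs j - A, H2) \<in> (prune_rel V ends c)\<^sup>* \<and>
        (\<forall>e\<in>H2. \<not> small_cut_edge V ends c H2 e) \<and>
        ((Gs j - A, A, D), (G3, A3, D3)) \<in> (sep_rel V ends \<delta> H2)\<^sup>* \<and>
        sep_done V ends \<delta> H2 G3 \<and>
        st' = (Gs(j := G3), Hs(j := H2), D3, A3)))"

definition cleanup :: "nat set \<Rightarrow> (nat \<Rightarrow> nat \<times> nat) \<Rightarrow> nat \<Rightarrow> nat \<Rightarrow> nat \<Rightarrow> cstate \<Rightarrow> cstate \<Rightarrow> bool" where
  "cleanup V ends c \<delta> l st st' \<longleftrightarrow>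
     (\<exists>f. f 0 = st \<and> (\<forall>j\<le>l. level_step V ends c \<delta> j (f j) (f (Suc j))) \<and> st' = f (Suc l))"

text \<open>Global state: (current G, G_j family, H_j family, D)\<close>
type_synonym gstate = "nat set \<times> (nat \<Rightarrow> nat set) \<times> (nat \<Rightarrow> nat set) \<times> nat set"

definition H_init :: "nat \<Rightarrow> (nat \<Rightarrow> nat \<Rightarrow> nat) \<Rightarrow> nat \<Rightarrow> nat set" where
  "H_init s r i = (\<Union>k\<in>{1..i}. r k ` {1..s})"

definition initialized :: "nat set \<Rightarrow> (nat \<Rightarrow> nat \<times> nat) \<Rightarrow> nat \<Rightarrow> nat \<Rightarrow> nat \<Rightarrow> nat \<Rightarrow> real
    \<Rightarrow> (nat \<Rightarrow> nat \<Rightarrow> nat) \<Rightarrow> gstate \<Rightarrow> bool" where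
  "initialized V ends c \<delta> l m p r st \<longleftrightarrow> (case st of (G, Gs, Hs, D) \<Rightarrow>
     G = {1..m} \<and>
     (\<exists>A'. cleanup V ends c \<delta> l (\<lambda>i. {1..m}, H_init (nat \<lceil>p * real m\<rceil>) r, {}, {}) (Gs, Hs, D, A')))"

definition delete_step :: "nat set \<Rightarrow> (nat \<Rightarrow> nat \<times> nat) \<Rightarrow> nat \<Rightarrow> nat \<Rightarrow> nat \<Rightarrow> nat
    \<Rightarrow> gstate \<Rightarrow> gstate \<Rightarrow> bool" where
  "delete_step V ends c \<delta> l e st st' \<longleftrightarrow> (case st of (G, Gs, Hs, D) \<Rightarrow>
     (case st' of (G', Gs', Hs', D') \<Rightarrow>
        e \<in> G \<and> G' = G - {e} \<and>
        (\<exists>A'. cleanup V ends c \<delta> l (Gs, Hs, D - {e}, {e}) (Gs', Hs', D', A'))))"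

definition cert :: "nat \<Rightarrow> gstate \<Rightarrow> nat set" where
  "cert l st = (case st of (G, Gs, Hs, D) \<Rightarrow> Hs l \<union> D)"

end

theory Submission
  imports Defs
begin

definition cl :: "nat set \<Rightarrow> (nat \<Rightarrow> nat \<times> nat) \<Rightarrow> nat set \<Rightarrow> nat \<Rightarrow> nat set" where
  "cl V ends F x = {y\<in>V. (x,y) \<in> (adj ends F)\<^sup>*}"

definition good :: "nat set \<Rightarrow> (nat \<Rightarrow> nat \<times> nat) \<Rightarrow> nat set \<Rightarrow> nat set \<Rightarrow> nat set set" where
  "good V ends H G = {C \<in> comps V ends H. bd ends G C = {}}"

definition Phi :: "nat set \<Rightarrow> (nat \<Rightarrow> nat \<times> nat) \<Rightarrow> nat set \<Rightarrow> nat set \<Rightarrow> nat" where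
  "Phi V ends H G = 2 * card V - (card (comps V ends H) + card (good V ends H G))"

lemma comps_eq: "comps V ends F = cl V ends F ` V"
  by (auto simp: comps_def cl_def)

lemma sym_adj: "sym (adj ends F)"
  by (auto simp: sym_def adj_def)

lemma rtr_sym: "(x,y) \<in> (adj ends F)\<^sup>* \<Longrightarrow> (y,x) \<in> (adj ends F)\<^sup>*"
  using sym_rtrancl[OF sym_adj] by (auto simp: sym_def)

lemma cl_self: "x \<in> V \<Longrightarrow> x \<in> cl V ends F x"
  by (auto simp: cl_def)

lemma cl_eq: "y \<in> cl V ends F x \<Longrightarrow> cl V ends F y = cl V ends F x"
proof -
  assume "y \<in> cl V ends F x"
  hence xy: "(x,y) \<in> (adj ends F)\<^sup>*" by (simp add: cl_def)
  hence yx: "(y,x) \<in> (adj ends F)\<^sup>*" by (rule rtr_sym)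
  show ?thesis unfolding cl_def using rtrancl_trans[OF xy] rtrancl_trans[OF yx] by blast
qed

lemma cl_mono: "F' \<subseteq> F \<Longrightarrow> cl V ends F' x \<subseteq> cl V ends F x"
proof -
  assume "F' \<subseteq> F"
  hence "adj ends F' \<subseteq> adj ends F" by (auto simp: adj_def)
  hence "(adj ends F')\<^sup>* \<subseteq> (adj ends F)\<^sup>*" by (rule rtrancl_mono)
  thus ?thesis by (auto simp: cl_def)
qed

lemma cl_sub: "cl V ends F x \<subseteq> V" by (auto simp: cl_def)

lemma finite_comps: "finite V \<Longrightarrow> finite (comps V ends F)"
  by (simp add: comps_eq)

lemma card_comps: "finite V \<Longrightarrow> card (comps V ends F) \<le> card V"
  by (simp add: comps_eq card_image_le)

lemma good_sub: "good V ends H G \<subseteq> comps V ends H" by (auto simp: good_def)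

lemma card_good: "finite V \<Longrightarrow> card (good V ends H G) \<le> card (comps V ends H)"
  by (intro card_mono finite_comps good_sub)

lemma bd_mono: "G' \<subseteq> G \<Longrightarrow> bd ends G' C \<subseteq> bd ends G C"
  by (auto simp: bd_def)

lemma Phi_G: assumes "finite V" "G' \<subseteq> G" shows "Phi V ends H G' \<le> Phi V ends H G"
proof -
  have "good V ends H G \<subseteq> good V ends H G'" using bd_mono[OF assms(2)] by (auto simp: good_def)
  hence "card (good V ends H G) \<le> card (good V ends H G')"
    by (intro card_mono finite_subset[OF good_sub] finite_comps assms(1))
  thus ?thesis by (simp add: Phi_def)
qed

lemma comps_H:
  assumes fin: "finite V" and sub: "H' \<subseteq> H"
  shows "card (comps V ends H) + card (good V ends H G) \<le> card (comps V ends H') + card (good V ends H' G)"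
proof -
  let ?C = "comps V ends H" and ?C' = "comps V ends H'"
  define fib where "fib C = {C'\<in>?C'. C' \<subseteq> C}" for C
  have finC: "finite ?C" "finite ?C'" using fin finite_comps by auto
  have cover: "?C' = (\<Union>C\<in>?C. fib C)"
  proof
    show "?C' \<subseteq> (\<Union>C\<in>?C. fib C)"
    proof
      fix C' assume "C' \<in> ?C'"
      then obtain x where x: "x \<in> V" "C' = cl V ends H' x" by (auto simp: comps_eq)
      hence "C' \<in> fib (cl V ends H x)" using cl_mono[OF sub] \<open>C' \<in> ?C'\<close> by (auto simp: fib_def)
      thus "C' \<in> (\<Union>C\<in>?C. fib C)" using x by (auto simp: comps_eq)
    qed
  qed (auto simp: fib_def)
  have disj: "fib C1 \<inter> fib C2 = {}" if h: "C1 \<in> ?C" "C2 \<in> ?C" "C1 \<noteq> C2" for C1 C2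
  proof (rule ccontr)
    assume "fib C1 \<inter> fib C2 \<noteq> {}"
    then obtain C' where "C' \<in> fib C1" "C' \<in> fib C2" by auto
    then obtain x where x: "x \<in> V" "C' = cl V ends H' x" "C' \<subseteq> C1" "C' \<subseteq> C2" by (auto simp: fib_def comps_eq)
    hence x12: "x \<in> C1" "x \<in> C2" using cl_self by auto
    obtain a b where ab: "C1 = cl V ends H a" "C2 = cl V ends H b" using h(1,2) by (auto simp: comps_eq)
    have "cl V ends H x = C1" using cl_eq[of x V ends H a] x12(1) ab(1) by simp
    moreover have "cl V ends H x = C2" using cl_eq[of x V ends H b] x12(2) ab(2) by simp
    ultimately show False using h(3) by simp
  qed
  have finfib: "finite (fib C)" for C using finC by (auto simp: fib_def)
  have c': "card ?C' = (\<Sum>C\<in>?C. card (fib C))"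
    unfolding cover by (rule card_UN_disjoint) (use finC finfib disj in auto)
  have fibge: "1 + (if C \<in> good V ends H G - ?C' then 1 else 0) \<le> card (fib C)" if hC: "C \<in> ?C" for C
  proof -
    obtain x where x: "x \<in> V" "C = cl V ends H x" using hC by (auto simp: comps_eq)
    have a: "cl V ends H' x \<in> fib C" using x cl_mono[OF sub] by (auto simp: fib_def comps_eq)
    show ?thesis
    proof (cases "C \<in> good V ends H G - ?C'")
      case True
      hence "cl V ends H' x \<noteq> C" using x by (auto simp: comps_eq)
      then obtain y where y: "y \<in> C" "y \<notin> cl V ends H' x" using a by (auto simp: fib_def)
      have yV: "y \<in> V" using y(1) x(2) cl_sub[of V ends H x] by blast
      have "cl V ends H y = C" using cl_eq[of y V ends H x] y(1) x(2) by simp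
      hence "cl V ends H' y \<subseteq> C" using cl_mono[OF sub] by blast
      hence b: "cl V ends H' y \<in> fib C" using yV by (auto simp: fib_def comps_eq)
      have "cl V ends H' y \<noteq> cl V ends H' x" using y(2) cl_self[OF yV, of ends H'] by auto
      hence "card {cl V ends H' x, cl V ends H' y} = 2" by simp
      moreover have "card {cl V ends H' x, cl V ends H' y} \<le> card (fib C)"
        using a b finfib by (intro card_mono) auto
      ultimately show ?thesis using True by simp
    next
      case False
      have "card {cl V ends H' x} \<le> card (fib C)" using a finfib by (intro card_mono) auto
      thus ?thesis using False by (simp only: if_False) simp
    qed
  qed
  have g1: "card (good V ends H G) = card (good V ends H G \<inter> ?C') + card (good V ends H G - ?C')"
  proof -
    have fg: "finite (good V ends H G)" using finite_subset[OF good_sub finC(1)] .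
    have "good V ends H G = (good V ends H G \<inter> ?C') \<union> (good V ends H G - ?C')" by blast
    hence "card (good V ends H G) = card ((good V ends H G \<inter> ?C') \<union> (good V ends H G - ?C'))" by simp
    also have "\<dots> = card (good V ends H G \<inter> ?C') + card (good V ends H G - ?C')"
      by (rule card_Un_disjoint) (use fg in auto)
    finally show ?thesis .
  qed
  have g2: "card (good V ends H G \<inter> ?C') \<le> card (good V ends H' G)"
    by (intro card_mono finite_subset[OF good_sub] finC) (auto simp: good_def)
  have g3: "card (good V ends H G - ?C') = (\<Sum>C\<in>?C. if C \<in> good V ends H G - ?C' then 1 else 0)"
  proof -
    have "good V ends H G - ?C' = {C\<in>?C. C \<in> good V ends H G - ?C'}" using good_sub[of V ends H G] by auto
    hence "card (good V ends H G - ?C') = (\<Sum>C\<in>{C\<in>?C. C \<in> good V ends H G - ?C'}. 1)" by simp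
    also have "\<dots> = (\<Sum>C\<in>?C. if C \<in> good V ends H G - ?C' then 1 else 0)"
      by (rule sum.inter_filter[OF finC(1)])
    finally show ?thesis .
  qed
  have "card ?C + card (good V ends H G - ?C') = (\<Sum>C\<in>?C. 1 + (if C \<in> good V ends H G - ?C' then 1 else 0))"
    unfolding g3 sum.distrib by simp
  also have "\<dots> \<le> (\<Sum>C\<in>?C. card (fib C))" by (rule sum_mono) (rule fibge)
  finally show ?thesis using c' g1 g2 by linarith
qed

lemma Phi_H: assumes "finite V" "H' \<subseteq> H" shows "Phi V ends H' G \<le> Phi V ends H G"
  using comps_H[OF assms, where G=G and ends=ends] by (simp add: Phi_def)


lemma sep_one:
  assumes fin: "finite V" and C: "C \<in> comps V ends H" and S: "S = bd ends G C" "0 < card S" "card S < \<delta>"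
  shows "card S + \<delta> * Phi V ends H (G - S) \<le> \<delta> * Phi V ends H G"
proof -
  have g: "insert C (good V ends H G) \<subseteq> good V ends H (G - S)"
    using C S(1) bd_mono[of "G - S" G] by (auto simp: good_def bd_def)
  have nC: "C \<notin> good V ends H G" using S by (auto simp: good_def)
  have fg: "finite (good V ends H (G - S))" using finite_subset[OF good_sub finite_comps[OF fin]] .
  have "card (good V ends H G) + 1 \<le> card (good V ends H (G - S))"
    using card_mono[OF fg g] nC finite_subset[OF g fg] by simp
  moreover have "card (good V ends H (G - S)) \<le> card (comps V ends H)" using card_good[OF fin] .
  moreover have "card (comps V ends H) \<le> card V" using card_comps[OF fin] .
  ultimately have "Phi V ends H (G - S) + 1 \<le> Phi V ends H G" unfolding Phi_def by linarith
  hence "\<delta> * Phi V ends H (G - S) + \<delta> \<le> \<delta> * Phi V ends H G"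
    by (metis add_mult_distrib2 mult.right_neutral mult_le_mono2)
  thus ?thesis using S by linarith
qed

lemma sep_chain:
  assumes fin: "finite V" and st: "(s, t) \<in> (sep_rel V ends \<delta> H)\<^sup>*"
  shows "fst t \<subseteq> fst s \<and> finite (snd (snd t) - snd (snd s)) \<and>
     card (snd (snd t) - snd (snd s)) + \<delta> * Phi V ends H (fst t) \<le> \<delta> * Phi V ends H (fst s)"
  using st
proof (induction rule: rtrancl_induct)
  case base
  then show ?case by simp
next
  case (step y z)
  from step(2) obtain G A D S C where yz: "y = (G, A, D)" "z = (G - S, A \<union> S, D \<union> S)"
    "C \<in> comps V ends H" "S = bd ends G C" "0 < card S" "card S < \<delta>"
    by (auto simp: sep_rel_def)
  have one: "card S + \<delta> * Phi V ends H (G - S) \<le> \<delta> * Phi V ends H G"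
    using sep_one[OF fin yz(3-6)] .
  have finS: "finite S" using yz(5) card_ge_0_finite by blast
  have sub: "(D \<union> S) - snd (snd s) \<subseteq> (D - snd (snd s)) \<union> S" by blast
  have fin2: "finite (D - snd (snd s))" using step(3) yz by simp
  have "card ((D \<union> S) - snd (snd s)) \<le> card ((D - snd (snd s)) \<union> S)"
    using sub fin2 finS by (intro card_mono) auto
  also have "\<dots> \<le> card (D - snd (snd s)) + card S" by (rule card_Un_le)
  finally have c: "card ((D \<union> S) - snd (snd s)) \<le> card (D - snd (snd s)) + card S" .
  have fin3: "finite ((D \<union> S) - snd (snd s))" using fin2 finS by (intro finite_subset[OF sub]) auto
  show ?case using step(3) yz one c fin2 finS fin3 by auto
qed

lemma prune_chain:
  assumes "(H, H2) \<in> (prune_rel V ends c)\<^sup>*" shows "H2 \<subseteq> H"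
  using assms by (induction rule: rtrancl_induct) (auto simp: prune_rel_def)

lemma level_lem:
  assumes fin: "finite V" and ls: "level_step V ends c \<delta> j (Gs, Hs, D, A) (Gs', Hs', D', A')"
  shows "(\<forall>i. i \<noteq> j \<longrightarrow> Gs' i = Gs i \<and> Hs' i = Hs i) \<and> Gs' j \<subseteq> Gs j \<and> Hs' j \<subseteq> Hs j \<and>
     finite (D' - D) \<and> card (D' - D) + \<delta> * Phi V ends (Hs' j) (Gs' j) \<le> \<delta> * Phi V ends (Hs j) (Gs j)"
proof -
  from ls obtain H2 G3 A3 D3 where h:
    "(Hs j - A, H2) \<in> (prune_rel V ends c)\<^sup>*"
    "((Gs j - A, A, D), (G3, A3, D3)) \<in> (sep_rel V ends \<delta> H2)\<^sup>*"
    "(Gs', Hs', D', A') = (Gs(j := G3), Hs(j := H2), D3, A3)"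
    unfolding level_step_def by auto
  have H2: "H2 \<subseteq> Hs j" using prune_chain[OF h(1)] by blast
  have sc: "G3 \<subseteq> Gs j - A \<and> finite (D3 - D) \<and> card (D3 - D) + \<delta> * Phi V ends H2 G3 \<le> \<delta> * Phi V ends H2 (Gs j - A)"
    using sep_chain[OF fin h(2)] by simp
  have "Phi V ends H2 (Gs j - A) \<le> Phi V ends H2 (Gs j)" by (rule Phi_G[OF fin]) auto
  also have "\<dots> \<le> Phi V ends (Hs j) (Gs j)" by (rule Phi_H[OF fin H2])
  finally have m: "\<delta> * Phi V ends H2 (Gs j - A) \<le> \<delta> * Phi V ends (Hs j) (Gs j)" by (rule mult_le_mono2)
  have "card (D3 - D) + \<delta> * Phi V ends H2 G3 \<le> \<delta> * Phi V ends (Hs j) (Gs j)"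
    using sc m by linarith
  thus ?thesis using h(3) sc H2 by auto
qed


definition Ptot :: "nat set \<Rightarrow> (nat \<Rightarrow> nat \<times> nat) \<Rightarrow> nat \<Rightarrow> (nat \<Rightarrow> nat set) \<Rightarrow> (nat \<Rightarrow> nat set) \<Rightarrow> nat" where
  "Ptot V ends l Gs Hs = (\<Sum>j\<le>l. Phi V ends (Hs j) (Gs j))"

lemma Ptot_le: "finite V \<Longrightarrow> Ptot V ends l Gs Hs \<le> (l + 1) * (2 * card V)"
proof -
  have "Ptot V ends l Gs Hs \<le> (\<Sum>j\<le>l. 2 * card V)" unfolding Ptot_def
    by (rule sum_mono) (simp add: Phi_def)
  thus ?thesis by simp
qed

lemma cleanup_lem:
  assumes fin: "finite V" and cu: "cleanup V ends c \<delta> l (Gs, Hs, D, A) (Gs', Hs', D', A')"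
  shows "(\<forall>i. Hs' i \<subseteq> Hs i) \<and> finite (D' - D) \<and>
     card (D' - D) + \<delta> * Ptot V ends l Gs' Hs' \<le> \<delta> * Ptot V ends l Gs Hs"
proof -
  from cu obtain f where f: "f 0 = (Gs, Hs, D, A)" "\<forall>j\<le>l. level_step V ends c \<delta> j (f j) (f (Suc j))"
    "(Gs', Hs', D', A') = f (Suc l)" unfolding cleanup_def by auto
  define GG where "GG k = fst (f k)" for k
  define HH where "HH k = fst (snd (f k))" for k
  define DD where "DD k = fst (snd (snd (f k)))" for k
  define AA where "AA k = snd (snd (snd (f k)))" for k
  have fk: "f k = (GG k, HH k, DD k, AA k)" for k by (simp add: GG_def HH_def DD_def AA_def)
  have inv: "k \<le> Suc l \<Longrightarrow> (\<forall>i. HH k i \<subseteq> Hs i) \<and> finite (DD k - D) \<and>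
     card (DD k - D) + \<delta> * Ptot V ends l (GG k) (HH k) \<le> \<delta> * Ptot V ends l Gs Hs" for k
  proof (induction k)
    case 0
    then show ?case using f(1) fk[of 0] by simp
  next
    case (Suc k)
    hence kl: "k \<le> l" by simp
    have IH: "(\<forall>i. HH k i \<subseteq> Hs i) \<and> finite (DD k - D) \<and>
     card (DD k - D) + \<delta> * Ptot V ends l (GG k) (HH k) \<le> \<delta> * Ptot V ends l Gs Hs"
      using Suc by simp
    have L: "(\<forall>i. i \<noteq> k \<longrightarrow> GG (Suc k) i = GG k i \<and> HH (Suc k) i = HH k i) \<and> GG (Suc k) k \<subseteq> GG k k \<and>
      HH (Suc k) k \<subseteq> HH k k \<and> finite (DD (Suc k) - DD k) \<and>
      card (DD (Suc k) - DD k) + \<delta> * Phi V ends (HH (Suc k) k) (GG (Suc k) k) \<le> \<delta> * Phi V ends (HH k k) (GG k k)"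
    proof -
      have "level_step V ends c \<delta> k (f k) (f (Suc k))" using f(2) kl by simp
      hence "level_step V ends c \<delta> k (GG k, HH k, DD k, AA k) (GG (Suc k), HH (Suc k), DD (Suc k), AA (Suc k))"
        by (simp only: fk)
      from level_lem[OF fin this] show ?thesis .
    qed
    have kin: "k \<in> {..l}" using kl by simp
    have rest: "(\<Sum>j\<in>{..l} - {k}. Phi V ends (HH (Suc k) j) (GG (Suc k) j)) = (\<Sum>j\<in>{..l} - {k}. Phi V ends (HH k j) (GG k j))"
      using L by (intro sum.cong) auto
    have P1: "Ptot V ends l (GG (Suc k)) (HH (Suc k)) = Phi V ends (HH (Suc k) k) (GG (Suc k) k) + (\<Sum>j\<in>{..l} - {k}. Phi V ends (HH k j) (GG k j))"
      unfolding Ptot_def using sum.remove[OF _ kin, of "\<lambda>j. Phi V ends (HH (Suc k) j) (GG (Suc k) j)"] rest by simp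
    have P0: "Ptot V ends l (GG k) (HH k) = Phi V ends (HH k k) (GG k k) + (\<Sum>j\<in>{..l} - {k}. Phi V ends (HH k j) (GG k j))"
      unfolding Ptot_def using sum.remove[OF _ kin] by simp
    have sub: "DD (Suc k) - D \<subseteq> (DD (Suc k) - DD k) \<union> (DD k - D)" by blast
    have fin1: "finite (DD (Suc k) - D)" using IH L by (intro finite_subset[OF sub]) auto
    have "card (DD (Suc k) - D) \<le> card ((DD (Suc k) - DD k) \<union> (DD k - D))"
      using IH L by (intro card_mono[OF _ sub]) auto
    also have "\<dots> \<le> card (DD (Suc k) - DD k) + card (DD k - D)" by (rule card_Un_le)
    finally have c: "card (DD (Suc k) - D) \<le> card (DD (Suc k) - DD k) + card (DD k - D)" .
    have H: "\<forall>i. HH (Suc k) i \<subseteq> Hs i"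
    proof
      fix i show "HH (Suc k) i \<subseteq> Hs i"
      proof (cases "i = k")
        case True thus ?thesis using IH L by blast
      next
        case False thus ?thesis using IH L by simp
      qed
    qed
    have "card (DD (Suc k) - D) + \<delta> * Ptot V ends l (GG (Suc k)) (HH (Suc k)) \<le> \<delta> * Ptot V ends l Gs Hs"
      using IH L c P0 P1 by (simp add: add_mult_distrib2)
    then show ?case using H fin1 by blast
  qed
  show ?thesis using inv[of "Suc l"] f(3) fk[of "Suc l"] by simp
qed


definition Pg :: "nat set \<Rightarrow> (nat \<Rightarrow> nat \<times> nat) \<Rightarrow> nat \<Rightarrow> gstate \<Rightarrow> nat" where
  "Pg V ends l st = (case st of (G, Gs, Hs, D) \<Rightarrow> Ptot V ends l Gs Hs)"

lemma delete_lem: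
  assumes fin: "finite V" and ds: "delete_step V ends c \<delta> l e st st'"
  shows "card (cert l st' - cert l st) + \<delta> * Pg V ends l st' \<le> \<delta> * Pg V ends l st"
proof -
  obtain G Gs Hs D where st: "st = (G, Gs, Hs, D)" by (cases st) auto
  obtain G' Gs' Hs' D' where st': "st' = (G', Gs', Hs', D')" by (cases st') auto
  from ds obtain A' where cu: "cleanup V ends c \<delta> l (Gs, Hs, D - {e}, {e}) (Gs', Hs', D', A')"
    unfolding delete_step_def st st' by auto
  note C = cleanup_lem[OF fin cu]
  have sub: "cert l st' - cert l st \<subseteq> D' - (D - {e})" using C by (auto simp: cert_def st st')
  have "card (cert l st' - cert l st) \<le> card (D' - (D - {e}))" using C by (intro card_mono[OF _ sub]) auto
  thus ?thesis using C by (simp add: Pg_def st st')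
qed

lemma init_lem:
  assumes fin: "finite V" and ini: "initialized V ends c \<delta> l m p r st0"
  shows "card (cert l st0) \<le> l * nat \<lceil>p * real m\<rceil> + \<delta> * ((l + 1) * (2 * card V))"
proof -
  obtain G Gs Hs D where st: "st0 = (G, Gs, Hs, D)" by (cases st0) auto
  define s where "s = nat \<lceil>p * real m\<rceil>"
  from ini obtain A' where cu: "cleanup V ends c \<delta> l (\<lambda>i. {1..m}, H_init s r, {}, {}) (Gs, Hs, D, A')"
    unfolding initialized_def st s_def by auto
  note C = cleanup_lem[OF fin cu]
  have "card (H_init s r l) \<le> (\<Sum>k\<in>{1..l}. card (r k ` {1..s}))"
    unfolding H_init_def by (rule card_UN_le) simp
  also have "\<dots> \<le> (\<Sum>k\<in>{1..l}. s)" using card_image_le[OF finite_atLeastAtMost[of 1 s]] by (intro sum_mono) simp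
  finally have h1: "card (H_init s r l) \<le> l * s" by simp
  have finH: "finite (H_init s r l)" by (simp add: H_init_def)
  have h2: "card (Hs l) \<le> l * s" using C h1 card_mono[OF finH, of "Hs l"] by fastforce
  have "card D \<le> \<delta> * Ptot V ends l (\<lambda>i. {1..m}) (H_init s r)" using C by simp
  also have "\<dots> \<le> \<delta> * ((l + 1) * (2 * card V))" by (rule mult_le_mono2[OF Ptot_le[OF fin]])
  finally have h3: "card D \<le> \<delta> * ((l + 1) * (2 * card V))" .
  have "card (cert l st0) \<le> card (Hs l) + card D" by (simp add: cert_def st card_Un_le)
  thus ?thesis unfolding s_def[symmetric] using h2 h3 by linarith
qed

lemma tele:
  assumes fin: "finite V" and len: "length sts = length es"
    and steps: "\<forall>k<length es. delete_step V ends c \<delta> l (es ! k) ((st0 # sts) ! k) (sts ! k)"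
  shows "t \<le> length es \<Longrightarrow> (\<Sum>k<t. card (cert l (sts ! k) - cert l ((st0 # sts) ! k))) + \<delta> * Pg V ends l ((st0 # sts) ! t)
     \<le> \<delta> * Pg V ends l st0"
proof (induction t)
  case 0
  then show ?case by simp
next
  case (Suc t)
  have d: "delete_step V ends c \<delta> l (es ! t) ((st0 # sts) ! t) (sts ! t)" using steps Suc(2) by simp
  have "card (cert l (sts ! t) - cert l ((st0 # sts) ! t)) + \<delta> * Pg V ends l (sts ! t) \<le> \<delta> * Pg V ends l ((st0 # sts) ! t)"
    using delete_lem[OF fin d] by simp
  then show ?case using Suc by simp
qed

theorem lemma7:
  fixes a1 a2 a3 a4 :: real
  assumes "a1 > 0" "a2 > 0" "a3 > 0" "a4 > 0"
  shows "\<exists>(K::real) (N::nat). \<forall>(V::nat set) ends m c \<delta> l (p::real) r st0 es sts.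
     (finite V \<and> N \<le> card V \<and> edges_ok V ends m \<and>
      1 \<le> c \<and> c < \<delta> \<and> 1 \<le> l \<and> 0 < p \<and> p < 1 \<and>
      a1 * ln (real (card V)) \<le> real l \<and> real l \<le> a2 * ln (real (card V)) \<and>
      p \<le> a3 / ln (real (card V)) \<and> a4 * real c \<le> p * real \<delta> \<and>
      (\<forall>i\<in>{1..l}. \<forall>k\<in>{1..nat \<lceil>p * real m\<rceil>}. r i k \<in> {1..m}) \<and>
      initialized V ends c \<delta> l m p r st0 \<and>
      length sts = length es \<and>
      (\<forall>k<length es. delete_step V ends c \<delta> l (es ! k) ((st0 # sts) ! k) (sts ! k)))
     \<longrightarrow>
      real (card (cert l st0))
        \<le> K * (real m * p * ln (real (card V)) + real (card V) * real \<delta> * ln (real (card V))) \<and>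
      real (\<Sum>k<length es. card (cert l (sts ! k) - cert l ((st0 # sts) ! k)))
        \<le> K * (real (card V) * real \<delta> * ln (real (card V)))"
proof (intro exI allI impI)
  fix V :: "nat set" and ends m c \<delta> l and p :: real and r st0 and es :: "nat list" and sts
  assume H: "finite V \<and> 0 \<le> card V \<and> edges_ok V ends m \<and>
      1 \<le> c \<and> c < \<delta> \<and> 1 \<le> l \<and> 0 < p \<and> p < 1 \<and>
      a1 * ln (real (card V)) \<le> real l \<and> real l \<le> a2 * ln (real (card V)) \<and>
      p \<le> a3 / ln (real (card V)) \<and> a4 * real c \<le> p * real \<delta> \<and>
      (\<forall>i\<in>{1..l}. \<forall>k\<in>{1..nat \<lceil>p * real m\<rceil>}. r i k \<in> {1..m}) \<and>
      initialized V ends c \<delta> l m p r st0 \<and>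
      length sts = length es \<and>
      (\<forall>k<length es. delete_step V ends c \<delta> l (es ! k) ((st0 # sts) ! k) (sts ! k))"
  define n where "n = card V"
  define L where "L = ln (real n)"
  define s where "s = nat \<lceil>p * real m\<rceil>"
  have fin: "finite V" using H by simp
  have lL: "real l \<le> a2 * L" "1 \<le> l" using H by (auto simp: L_def n_def)
  have Lpos: "L > 0"
  proof (rule ccontr)
    assume "\<not> L > 0"
    hence "a2 * L \<le> 0" using assms(2) by (simp add: mult_nonpos_nonneg mult_le_0_iff)
    thus False using lL by simp
  qed
  have n1: "real n \<ge> 1"
  proof (rule ccontr)
    assume "\<not> real n \<ge> 1"
    hence "n = 0" by simp
    thus False using Lpos by (simp add: L_def)
  qed
  have d1: "real \<delta> \<ge> 1" using H by simp
  have p0: "p \<ge> 0" using H by simp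
  have sle: "real s \<le> p * real m + 1"
  proof -
    have "0 \<le> p * real m" using p0 by simp
    hence "real s = real_of_int \<lceil>p * real m\<rceil>" by (simp add: s_def)
    also have "\<dots> \<le> p * real m + 1" by linarith
    finally show ?thesis .
  qed
  have c1: "card (cert l st0) \<le> l * s + \<delta> * ((l + 1) * (2 * n))"
    using init_lem[OF fin, of ends c \<delta> l m p r st0] H by (simp add: s_def n_def)
  have tl: "(\<Sum>k<length es. card (cert l (sts ! k) - cert l ((st0 # sts) ! k))) + \<delta> * Pg V ends l ((st0 # sts) ! length es)
     \<le> \<delta> * Pg V ends l st0"
    using tele[OF fin, of sts es ends c \<delta> l st0 "length es"] H by simp
  have pg: "Pg V ends l st0 \<le> (l + 1) * (2 * n)"
    unfolding Pg_def n_def by (cases st0) (simp only: prod.case Ptot_le[OF fin])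
  have c2: "(\<Sum>k<length es. card (cert l (sts ! k) - cert l ((st0 # sts) ! k))) \<le> \<delta> * ((l + 1) * (2 * n))"
    using tl mult_le_mono2[OF pg, of \<delta>] by linarith
  have l2: "real l + 1 \<le> 2 * (a2 * L)" using lL by simp
  define X where "X = real m * p * L"
  define Y where "Y = real n * real \<delta> * L"
  have B: "real \<delta> * ((real l + 1) * (2 * real n)) \<le> 4 * (a2 * Y)"
  proof -
    have "real \<delta> * ((real l + 1) * (2 * real n)) \<le> real \<delta> * ((2 * (a2 * L)) * (2 * real n))"
      using l2 n1 d1 by (intro mult_left_mono mult_right_mono) auto
    thus ?thesis by (simp add: algebra_simps Y_def)
  qed
  have nd: "1 \<le> real n * real \<delta>" using mult_mono[OF n1 d1] by simp
  have A: "real l * real s \<le> a2 * X + a2 * Y"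
  proof -
    have "real l * real s \<le> (a2 * L) * (p * real m + 1)"
      using lL sle by (intro mult_mono) auto
    also have "\<dots> = a2 * X + a2 * L" by (simp add: algebra_simps X_def)
    also have "a2 * L \<le> a2 * Y"
    proof -
      have "1 * L \<le> (real n * real \<delta>) * L" using nd Lpos by (intro mult_right_mono) auto
      thus ?thesis using assms(2) unfolding Y_def by (intro mult_left_mono) auto
    qed
    finally show ?thesis by simp
  qed
  have aX: "0 \<le> a2 * X" using p0 Lpos assms(2) by (simp add: X_def)
  have aY: "0 \<le> a2 * Y" using Lpos assms(2) by (simp add: Y_def)
  have e1: "real (card (cert l st0)) \<le> real (l * s + \<delta> * ((l + 1) * (2 * n)))"
    using c1 by (simp only: of_nat_le_iff)
  have e2: "real (l * s + \<delta> * ((l + 1) * (2 * n))) = real l * real s + real \<delta> * ((real l + 1) * (2 * real n))"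
    by (simp add: algebra_simps)
  have e3: "5 * a2 * (X + Y) = 5 * (a2 * X) + 5 * (a2 * Y)" by (simp add: algebra_simps)
  have R1: "real (card (cert l st0)) \<le> 5 * a2 * (X + Y)"
    using e1 e2 e3 A B aX aY by linarith
  have f1: "real (\<Sum>k<length es. card (cert l (sts ! k) - cert l ((st0 # sts) ! k))) \<le> real (\<delta> * ((l + 1) * (2 * n)))"
    using c2 by (simp only: of_nat_le_iff)
  have f2: "real (\<delta> * ((l + 1) * (2 * n))) = real \<delta> * ((real l + 1) * (2 * real n))" by (simp add: algebra_simps)
  have e4: "5 * a2 * Y = 5 * (a2 * Y)" by simp
  have R2: "real (\<Sum>k<length es. card (cert l (sts ! k) - cert l ((st0 # sts) ! k))) \<le> 5 * a2 * Y"
    using f1 f2 B aY e4 by linarith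
  show "real (card (cert l st0))
        \<le> 5 * a2 * (real m * p * ln (real (card V)) + real (card V) * real \<delta> * ln (real (card V))) \<and>
      real (\<Sum>k<length es. card (cert l (sts ! k) - cert l ((st0 # sts) ! k)))
        \<le> 5 * a2 * (real (card V) * real \<delta> * ln (real (card V)))"
    using R1 R2 by (simp add: L_def n_def X_def Y_def)
qed

end
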